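(* Let $\mathcal{H}$ be a complex Hilbert space and $B,C\in\mathcal{B}(\mathcal{H})$. Then for every $0\le\alpha\le1$, $$\begin{aligned}w^4\left(\begin{bmatrix}0 & B\\ C & 0\end{bmatrix}\right)\le{}& \frac{1+\alpha}{8}\max\left\{\big\||B|^4+|C^*|^4\big\|,\ \big\||B^*|^4+|C|^4\big\|\right\}+\frac{1-\alpha}{4}\max\{w^2(BC),w^2(CB)\}\\&+\frac14\max\left\{\big\||B|^2+|C^*|^2\big\|,\ \big\||B^*|^2+|C|^2\big\|\right\}\cdot\max\{w(BC),w(CB)\}.\end{aligned}$$
   Context: $\mathcal{B}(\mathcal{H})$ is the algebra of bounded linear operators on $\mathcal{H}$ with operator norm $\|\cdot\|$. For $A\in\mathcal{B}(\mathcal{H})$, $A^*$ is the adjoint, $|A|=(A^*A)^{1/2}$, $|A^*|=(AA^* )^{1/2}$, and $w(A)=\sup_{\|x\|=1}|\langle Ax,x\rangle|$ is the numerical radius. The operator matrix $\begin{bmatrix}A&B\\C&D\end{bmatrix}$ acts on $\mathcal{H}\oplus\mathcal{H}$ by $(x_1,x_2)\mapsto(Ax_1+Bx_2,\,Cx_1+Dx_2)$; $0$ denotes the zero operator. *)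

theory Defs
  imports "HOL-Analysis.Analysis"
begin

class chilbert_space = banach +
  fixes scaleC :: "complex \<Rightarrow> 'a \<Rightarrow> 'a"
    and cinner :: "'a \<Rightarrow> 'a \<Rightarrow> complex"
  assumes scaleC_add_right: "scaleC a (x + y) = scaleC a x + scaleC a y"
    and scaleC_add_left: "scaleC (a + b) x = scaleC a x + scaleC b x"
    and scaleC_scaleC: "scaleC a (scaleC b x) = scaleC (a * b) x"
    and scaleC_one: "scaleC 1 x = x"
    and scaleR_scaleC: "scaleR r x = scaleC (complex_of_real r) x"
    and cinner_conj: "cinner x y = cnj (cinner y x)"
    and cinner_add_left: "cinner (x + y) z = cinner x z + cinner y z"
    and cinner_scaleC_left: "cinner (scaleC a x) y = a * cinner x y"
    and cinner_self: "cinner x x = complex_of_real ((norm x)\<^sup>2)"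

definition bounded_clinear :: "('a::chilbert_space \<Rightarrow> 'a) \<Rightarrow> bool" where
  "bounded_clinear T \<longleftrightarrow>
     (\<forall>x y. T (x + y) = T x + T y) \<and>
     (\<forall>a x. T (scaleC a x) = scaleC a (T x)) \<and>
     (\<exists>K. \<forall>x. norm (T x) \<le> norm x * K)"

definition cadjoint :: "('a::chilbert_space \<Rightarrow> 'a) \<Rightarrow> ('a \<Rightarrow> 'a)" where
  "cadjoint T = (THE S. \<forall>x y. cinner (T x) y = cinner x (S y))"

definition opadd :: "('a::chilbert_space \<Rightarrow> 'a) \<Rightarrow> ('a \<Rightarrow> 'a) \<Rightarrow> ('a \<Rightarrow> 'a)" where
  "opadd S T = (\<lambda>x. S x + T x)"

definition abs_sq :: "('a::chilbert_space \<Rightarrow> 'a) \<Rightarrow> ('a \<Rightarrow> 'a)" where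
  "abs_sq T = cadjoint T \<circ> T"

definition abs_adj_sq :: "('a::chilbert_space \<Rightarrow> 'a) \<Rightarrow> ('a \<Rightarrow> 'a)" where
  "abs_adj_sq T = T \<circ> cadjoint T"

text \<open>Numerical radius (supremum over the closed unit ball, which agrees with the
supremum over the unit sphere on nonzero spaces and gives 0 on the zero space).\<close>
definition numrad :: "('a::chilbert_space \<Rightarrow> 'a) \<Rightarrow> real" where
  "numrad T = (SUP x\<in>{x. norm x \<le> 1}. cmod (cinner (T x) x))"

text \<open>Numerical radius of the operator matrix [[A,B],[C,D]] acting on H \<oplus> H,
with the direct-sum inner product <(x1,x2),(y1,y2)> = <x1,y1> + <x2,y2>.\<close>
definition numrad_block ::
  "('a::chilbert_space \<Rightarrow> 'a) \<Rightarrow> ('a \<Rightarrow> 'a) \<Rightarrow> ('a \<Rightarrow> 'a) \<Rightarrow> ('a \<Rightarrow> 'a) \<Rightarrow> real" where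
  "numrad_block A B C D =
     (SUP p\<in>{(x1, x2). (norm x1)\<^sup>2 + (norm x2)\<^sup>2 \<le> 1}.
        cmod (cinner (A (fst p) + B (snd p)) (fst p) + cinner (C (fst p) + D (snd p)) (snd p)))"

end

theory Submission
  imports Defs
begin


locale cip =
  fixes pl :: "'v \<Rightarrow> 'v \<Rightarrow> 'v" and sc :: "complex \<Rightarrow> 'v \<Rightarrow> 'v" and ip :: "'v \<Rightarrow> 'v \<Rightarrow> complex"
  assumes ip_add: "ip (pl x y) z = ip x z + ip y z"
  and ip_sc: "ip (sc a x) y = a * ip x y"
  and ip_conj: "ip x y = cnj (ip y x)"
  and ip_real: "Im (ip x x) = 0"
  and ip_pos: "Re (ip x x) \<ge> 0"
begin

definition nrm where "nrm x = sqrt (Re (ip x x))"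

lemma ip_add_r: "ip z (pl x y) = ip z x + ip z y"
  by (metis complex_cnj_add ip_add ip_conj)

lemma ip_sc_r: "ip x (sc a y) = cnj a * ip x y"
  by (metis complex_cnj_cnj complex_cnj_mult ip_conj ip_sc)

lemma ip_self: "ip x x = complex_of_real (nrm x ^ 2)"
  using ip_real[of x] ip_pos[of x] unfolding nrm_def by (simp add: complex_eq_iff)

lemma nrm_ge0: "nrm x \<ge> 0" by (simp add: nrm_def ip_pos)

lemma cs: "cmod (ip x y) \<le> nrm x * nrm y"
proof (cases "nrm y = 0")
  case True
  have "ip x y = 0"
  proof (rule ccontr)
    assume c: "ip x y \<noteq> 0"
    define s where "s = (Re (ip x x) + 1) / (cmod (ip x y))^2"
    let ?t = "complex_of_real s * ip x y"
    let ?z = "pl x (sc (- ?t) y)"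
    have "ip y y = 0" using ip_self True by simp
    have "0 \<le> Re (ip ?z ?z)" by (rule ip_pos)
    also have "ip ?z ?z = ip x x - ?t * ip y x - cnj ?t * ip x y + ?t * cnj ?t * ip y y"
      by (simp add: ip_add ip_add_r ip_sc ip_sc_r algebra_simps)
    also have "\<dots> = ip x x - 2 * s * (ip x y * cnj (ip x y))"
      using \<open>ip y y = 0\<close> by (subst ip_conj[of y x]) (simp add: algebra_simps)
    finally have "0 \<le> Re (ip x x) - 2 * s * (cmod (ip x y))^2"
      by (simp add: complex_mult_cnj cmod_power2 del: of_real_power)
    hence "0 \<le> Re (ip x x) - 2 * (s * (cmod (ip x y))^2)" by (simp add: algebra_simps)
    moreover have "s * (cmod (ip x y))^2 = Re (ip x x) + 1" using c by (simp add: s_def)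
    ultimately show False using ip_pos[of x] by simp
  qed
  then show ?thesis using nrm_ge0 by (simp add: mult_nonneg_nonneg)
next
  case False
  hence ny: "nrm y > 0" using nrm_ge0 le_less by metis
  let ?t = "ip x y / complex_of_real ((nrm y)^2)"
  let ?z = "pl x (sc (- ?t) y)"
  have "0 \<le> Re (ip ?z ?z)" by (rule ip_pos)
  also have "ip ?z ?z = ip x x - ?t * ip y x - cnj ?t * ip x y + ?t * cnj ?t * ip y y"
    by (simp add: ip_add ip_add_r ip_sc ip_sc_r algebra_simps)
  also have "\<dots> = ip x x - ip x y * cnj (ip x y) / complex_of_real ((nrm y)^2)"
    using ny by (subst ip_conj[of y x], simp add: ip_self field_simps power2_eq_square)
  finally have "(cmod (ip x y))^2 / (nrm y)^2 \<le> (nrm x)^2"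
    by (simp add: complex_mult_cnj ip_self del: of_real_power) (simp add: Re_divide power2_eq_square, metis cmod_power2 power2_eq_square)
  hence "(cmod (ip x y))^2 \<le> (nrm x * nrm y)^2" using ny by (simp add: field_simps power_mult_distrib)
  thus ?thesis using nrm_ge0 by (meson mult_nonneg_nonneg power2_le_imp_le)
qed

lemma buzano: "cmod (ip a e * ip e b) \<le> (nrm e)^2 * (nrm a * nrm b + cmod (ip a b)) / 2"
proof -
  define r where "r = (nrm e)^2"
  define \<beta> where "\<beta> = ip b e"
  have "r \<ge> 0" by (simp add: r_def)
  define c where "c = pl (sc (2*\<beta>) e) (sc (- complex_of_real r) b)"
  have eb: "ip e b = cnj \<beta>" unfolding \<beta>_def by (rule ip_conj)
  have ee: "ip e e = complex_of_real r" unfolding r_def by (rule ip_self)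
  have h1: "ip a c = 2 * ip a e * ip e b - r * ip a b"
    unfolding c_def by (simp add: ip_add_r ip_sc_r eb)
  have be: "ip b e = \<beta>" by (simp add: \<beta>_def)
  have "ip c c = (2*\<beta>) * cnj (2*\<beta>) * ip e e + (2*\<beta>) * cnj (- complex_of_real r) * ip e b
        + (- complex_of_real r) * cnj (2*\<beta>) * ip b e + (- complex_of_real r) * cnj (- complex_of_real r) * ip b b"
    unfolding c_def by (simp only: ip_add_r ip_sc_r ip_add ip_sc) (simp add: algebra_simps)
  also have "\<dots> = r^2 * ip b b"
    unfolding eb ee be by (simp add: algebra_simps power2_eq_square)
  finally have "ip c c = r^2 * ip b b" .
  hence "(nrm c)^2 = (r * nrm b)^2" by (simp add: ip_self power_mult_distrib del: of_real_power)
       (metis of_real_eq_iff of_real_mult of_real_power)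
  hence nc: "nrm c = r * nrm b" using nrm_ge0 r_def
    by (metis power2_eq_iff_nonneg zero_le_power2 mult_nonneg_nonneg)
  have "2 * (ip a e * ip e b) = ip a c + r * ip a b" using h1 by simp
  hence "2 * cmod (ip a e * ip e b) = cmod (ip a c + r * ip a b)"
    by (metis norm_mult norm_numeral)
  also have "\<dots> \<le> cmod (ip a c) + r * cmod (ip a b)"
    using norm_triangle_ineq[of "ip a c" "r * ip a b"] \<open>r \<ge> 0\<close> by (simp add: norm_mult)
  also have "\<dots> \<le> nrm a * (r * nrm b) + r * cmod (ip a b)"
    using cs[of a c] nc by simp
  finally show ?thesis unfolding r_def by (simp add: algebra_simps)
qed
end


lemma cinner_conj': "cnj (cinner x y) = cinner y (x::'a::chilbert_space)"
  by (metis cinner_conj)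

interpretation hc: cip "(+) :: 'a::chilbert_space \<Rightarrow> _" scaleC cinner
proof
  fix x y z :: 'a and a
  show "cinner (x + y) z = cinner x z + cinner y z" by (rule cinner_add_left)
  show "cinner (scaleC a x) y = a * cinner x y" by (rule cinner_scaleC_left)
  show "cinner x y = cnj (cinner y x)" by (rule cinner_conj)
  show "Im (cinner x x) = 0" by (simp add: cinner_self)
  show "Re (cinner x x) \<ge> 0" by (simp add: cinner_self)
qed

lemma hc_nrm: "hc.nrm x = norm x"
  by (simp add: hc.nrm_def cinner_self)

lemma cs: "cmod (cinner x y) \<le> norm x * norm (y::'a::chilbert_space)"
  using hc.cs[of x y] by (simp add: hc_nrm)

interpretation hp: cip "\<lambda>p q. (fst p + fst q, snd p + snd q) :: 'a::chilbert_space \<times> 'a"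
   "\<lambda>a p. (scaleC a (fst p), scaleC a (snd p))" "\<lambda>p q. cinner (fst p) (fst q) + cinner (snd p) (snd q)"
proof
  fix x y z :: "'a \<times> 'a" and a
  show "cinner (fst (fst x + fst y, snd x + snd y)) (fst z) + cinner (snd (fst x + fst y, snd x + snd y)) (snd z)
    = cinner (fst x) (fst z) + cinner (snd x) (snd z) + (cinner (fst y) (fst z) + cinner (snd y) (snd z))"
    by (simp add: cinner_add_left)
  show "cinner (fst (scaleC a (fst x), scaleC a (snd x))) (fst y) + cinner (snd (scaleC a (fst x), scaleC a (snd x))) (snd y) =
    a * (cinner (fst x) (fst y) + cinner (snd x) (snd y))"
    by (simp add: cinner_scaleC_left algebra_simps)
  show "cinner (fst x) (fst y) + cinner (snd x) (snd y) = cnj (cinner (fst y) (fst x) + cinner (snd y) (snd x))"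
    by (metis cinner_conj complex_cnj_add)
  show "Im (cinner (fst x) (fst x) + cinner (snd x) (snd x)) = 0" by (simp add: cinner_self)
  show "Re (cinner (fst x) (fst x) + cinner (snd x) (snd x)) \<ge> 0" by (simp add: cinner_self)
qed

lemma hp_nrm2: "(hp.nrm (x1, x2))^2 = (norm x1)^2 + (norm x2)^2"
  by (simp add: hp.nrm_def cinner_self)

lemma pair_buzano:
  fixes a1 a2 e1 e2 b1 b2 :: "'a::chilbert_space"
  shows "cmod ((cinner a1 e1 + cinner a2 e2) * (cinner e1 b1 + cinner e2 b2))
     \<le> ((norm e1)^2 + (norm e2)^2) * (hp.nrm (a1,a2) * hp.nrm (b1,b2) + cmod (cinner a1 b1 + cinner a2 b2)) / 2"
  using hp.buzano[of "(a1,a2)" "(e1,e2)" "(b1,b2)"] hp_nrm2[of e1 e2] by simp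

lemma pair_cs:
  fixes a1 a2 b1 b2 :: "'a::chilbert_space"
  shows "cmod (cinner a1 b1 + cinner a2 b2) \<le> hp.nrm (a1,a2) * hp.nrm (b1,b2)"
  using hp.cs[of "(a1,a2)" "(b1,b2)"] by simp

lemma hp_nrm_ge0: "hp.nrm p \<ge> 0" by (rule hp.nrm_ge0)



lemma cinner_add_right: "cinner z (x + y) = cinner z x + cinner z (y::'a::chilbert_space)"
  by (rule hc.ip_add_r)
lemma cinner_scaleC_right: "cinner x (scaleC a y) = cnj a * cinner x (y::'a::chilbert_space)"
  by (rule hc.ip_sc_r)
lemma cinner_zero_left[simp]: "cinner 0 (y::'a::chilbert_space) = 0"
  using cinner_add_left[of "0::'a" 0 y] by simp
lemma cinner_zero_right[simp]: "cinner y (0::'a::chilbert_space) = 0"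
  using cinner_add_right[of y "0::'a" 0] by simp
lemma cinner_minus_left: "cinner (- x) (y::'a::chilbert_space) = - cinner x y"
  using cinner_add_left[of x "-x" y] by (simp add: eq_neg_iff_add_eq_0 add.commute)
lemma cinner_diff_left: "cinner (x - z) (y::'a::chilbert_space) = cinner x y - cinner z y"
  using cinner_add_left[of x "-z" y] cinner_minus_left[of z y] by simp
lemma cinner_minus_right: "cinner y (- x) = - cinner y (x::'a::chilbert_space)"
  using cinner_add_right[of y x "-x"] by (simp add: eq_neg_iff_add_eq_0 add.commute)
lemma cinner_diff_right: "cinner y (x - z) = cinner y x - cinner y (z::'a::chilbert_space)"
  using cinner_add_right[of y x "-z"] cinner_minus_right[of y z] by simp
lemma scaleC_zero_left[simp]: "scaleC 0 (x::'a::chilbert_space) = 0"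
  using scaleR_scaleC[of 0 x] by simp
lemma scaleC_zero_right[simp]: "scaleC a (0::'a::chilbert_space) = 0"
  using scaleC_add_right[of a "0::'a" 0] by simp
lemma norm_scaleC: "norm (scaleC a (x::'a::chilbert_space)) = cmod a * norm x"
proof -
  have "cinner (scaleC a x) (scaleC a x) = (a * cnj a) * cinner x x"
    by (simp add: cinner_scaleC_left cinner_scaleC_right mult.assoc)
  hence "complex_of_real ((norm (scaleC a x))^2) = complex_of_real ((cmod a)^2) * complex_of_real ((norm x)^2)"
    by (simp add: cinner_self complex_norm_square del: of_real_power)
  hence "complex_of_real ((norm (scaleC a x))^2) = complex_of_real ((cmod a * norm x)^2)"
    by (simp add: power_mult_distrib del: of_real_power)
  hence "(norm (scaleC a x))^2 = (cmod a * norm x)^2" using of_real_eq_iff by blast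
  thus ?thesis by (simp add: power2_eq_iff_nonneg)
qed
lemma cinner_self_eq0: "cinner x x = 0 \<longleftrightarrow> x = (0::'a::chilbert_space)"
  by (simp add: cinner_self)

lemma parallelogram: "(norm (x + y))^2 + (norm (x - y))^2 = 2 * (norm x)^2 + 2 * (norm (y::'a::chilbert_space))^2"
proof -
  have "cinner (x+y) (x+y) + cinner (x-y) (x-y) = 2 * cinner x x + 2 * cinner y y"
    by (simp add: cinner_add_left cinner_add_right cinner_diff_left cinner_diff_right algebra_simps)
  hence "complex_of_real ((norm (x + y))^2 + (norm (x - y))^2) = complex_of_real (2 * (norm x)^2 + 2 * (norm y)^2)"
    by (simp add: cinner_self del: of_real_power)
  thus ?thesis using of_real_eq_iff by blast
qed

lemma ext_cinner: "(\<And>x. cinner x u = cinner x v) \<Longrightarrow> u = (v::'a::chilbert_space)"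
proof -
  assume h: "\<And>x. cinner x u = cinner x v"
  have "cinner (u - v) (u - v) = 0" using h[of "u-v"] by (simp add: cinner_diff_right)
  thus ?thesis by (simp add: cinner_self_eq0)
qed



lemma small_orth:
  fixes c :: complex and Y :: real
  assumes "\<And>s::real. s > 0 \<Longrightarrow> 2 * s * (cmod c)^2 \<le> s^2 * (cmod c)^2 * Y" and "Y \<ge> 0"
  shows "c = 0"
proof (rule ccontr)
  assume "c \<noteq> 0"
  hence cp: "(cmod c)^2 > 0" by simp
  define s where "s = 1 / (Y + 1)"
  have sp: "s > 0" using assms(2) by (simp add: s_def)
  have "2 * s * (cmod c)^2 \<le> s^2 * (cmod c)^2 * Y" using assms(1) sp by blast
  hence "(s * (cmod c)^2) * 2 \<le> (s * (cmod c)^2) * (s * Y)" by (simp add: algebra_simps power2_eq_square)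
  hence "2 \<le> s * Y" using sp cp by (simp add: mult_le_cancel_left_pos)
  moreover have "s * Y < 1" using assms(2) by (simp add: s_def field_simps)
  ultimately show False by linarith
qed

lemma riesz:
  fixes f :: "'a::chilbert_space \<Rightarrow> complex"
  assumes add: "\<And>x y. f (x + y) = f x + f y" and sc: "\<And>a x. f (scaleC a x) = a * f x"
    and bd: "\<And>x. cmod (f x) \<le> norm x * K"
  shows "\<exists>z. \<forall>x. f x = cinner x z"
proof (cases "\<forall>x. f x = 0")
  case True
  then show ?thesis by (intro exI[of _ 0]) simp
next
  case False
  then obtain x0 where fx0: "f x0 \<noteq> 0" by blast
  have f0: "f 0 = 0" using add[of 0 0] by simp
  have fdiff: "f (x - y) = f x - f y" for x y using add[of "x - y" y] by simp
  define S where "S = {x::'a. norm x \<le> 1}"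
  define M where "M = (SUP x\<in>S. Re (f x))"
  have bdd: "bdd_above ((\<lambda>x. Re (f x)) ` S)"
  proof (rule bdd_aboveI2)
    fix x assume "x \<in> S"
    hence "norm x \<le> 1" by (simp add: S_def)
    have "Re (f x) \<le> cmod (f x)" by (rule complex_Re_le_cmod)
    also have "\<dots> \<le> norm x * K" by (rule bd)
    also have "\<dots> \<le> norm x * \<bar>K\<bar>" by (simp add: mult_left_mono)
    also have "\<dots> \<le> \<bar>K\<bar>" using \<open>norm x \<le> 1\<close> by (simp add: mult_left_le_one_le)
    finally show "Re (f x) \<le> \<bar>K\<bar>" .
  qed
  have upper: "x \<in> S \<Longrightarrow> Re (f x) \<le> M" for x unfolding M_def by (rule cSUP_upper[OF _ bdd])
  have S0: "0 \<in> S" by (simp add: S_def)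
  have rot: "\<exists>u\<in>S. Re (f u) = cmod (f y) / norm y" if "y \<noteq> 0" "f y \<noteq> 0" for y
  proof -
    define u where "u = scaleC (cnj (f y) / complex_of_real (cmod (f y) * norm y)) y"
    have "norm u = cmod (f y) / (cmod (f y) * norm y) * norm y"
      unfolding u_def using that by (simp add: norm_scaleC norm_divide norm_mult)
    hence "norm u = 1" using that by simp
    moreover have "f u = complex_of_real (cmod (f y) / norm y)"
      unfolding u_def sc using that
      by (simp add: complex_norm_square[symmetric] field_simps power2_eq_square del: of_real_power)
    ultimately show ?thesis by (intro bexI[of _ u]) (auto simp: S_def)
  qed
  have key: "cmod (f y) \<le> M * norm y" for y
  proof (cases "y = 0 \<or> f y = 0")
    case True
    have "0 \<le> M" using upper[OF S0] f0 by simp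
    then show ?thesis using True f0 by auto
  next
    case False
    then obtain u where "u \<in> S" "Re (f u) = cmod (f y) / norm y" using rot by blast
    hence "cmod (f y) / norm y \<le> M" using upper by metis
    then show ?thesis using False by (simp add: field_simps)
  qed
  have x0nz: "x0 \<noteq> 0" using fx0 f0 by auto
  obtain u0 where "u0 \<in> S" "Re (f u0) = cmod (f x0) / norm x0" using rot[OF x0nz fx0] by blast
  moreover have "cmod (f x0) / norm x0 > 0" using fx0 x0nz by simp
  ultimately have Mpos: "M > 0" using upper[of u0] by linarith
  have "\<forall>n. \<exists>x\<in>S. M - 1 / (real n + 1) < Re (f x)"
  proof
    fix n
    have "M - 1 / (real n + 1) < M" by simp
    thus "\<exists>x\<in>S. M - 1 / (real n + 1) < Re (f x)" unfolding M_def
      using less_cSUP_iff[OF _ bdd] S0 by (metis M_def empty_iff)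
  qed
  then obtain xs where xsS: "\<And>n. xs n \<in> S" and xsM: "\<And>n. M - 1 / (real n + 1) < Re (f (xs n))"
    by metis
  have xsn: "norm (xs n) \<le> 1" for n using xsS[of n] by (simp add: S_def)
  have dist_bd: "(norm (xs m - xs n))^2 \<le> 4 * (1 / (real m + 1) + 1 / (real n + 1)) / M" for m n
  proof -
    define d where "d = 1 / (real m + 1) + 1 / (real n + 1)"
    have dpos: "d \<ge> 0" by (simp add: d_def)
    have "2 * M - d < Re (f (xs m + xs n))"
      using xsM[of m] xsM[of n] by (simp add: add d_def)
    also have "\<dots> \<le> cmod (f (xs m + xs n))" by (rule complex_Re_le_cmod)
    also have "\<dots> \<le> M * norm (xs m + xs n)" by (rule key)
    finally have h1: "2 - d / M < norm (xs m + xs n)" using Mpos by (simp add: field_simps)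
    have par: "(norm (xs m - xs n))^2 = 2 * (norm (xs m))^2 + 2 * (norm (xs n))^2 - (norm (xs m + xs n))^2"
      using parallelogram[of "xs m" "xs n"] by simp
    have le4: "2 * (norm (xs m))^2 + 2 * (norm (xs n))^2 \<le> 4"
      using xsn[of m] xsn[of n] by (smt (verit) norm_ge_zero power_le_one)
    show ?thesis
    proof (cases "2 - d / M \<ge> 0")
      case True
      hence "(2 - d / M)^2 \<le> (norm (xs m + xs n))^2" using h1 by (intro power_mono) auto
      hence "(norm (xs m - xs n))^2 \<le> 4 - (2 - d/M)^2" using par le4 by simp
      also have "\<dots> \<le> 4 * d / M" using Mpos dpos by (simp add: power2_eq_square field_simps)
      finally show ?thesis by (simp add: d_def)
    next
      case False
      hence "4 * d / M > 8" using Mpos by (simp add: field_simps)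
      moreover have "(norm (xs m - xs n))^2 \<le> 4" using par le4 zero_le_power2[of "norm (xs m + xs n)"] by linarith
      ultimately show ?thesis by (simp add: d_def)
    qed
  qed
  have "Cauchy xs"
  proof (rule metric_CauchyI)
    fix e :: real assume ep: "e > 0"
    obtain N :: nat where N: "real N > 8 / (M * e^2)" using reals_Archimedean2 by blast
    show "\<exists>N. \<forall>m\<ge>N. \<forall>n\<ge>N. dist (xs m) (xs n) < e"
    proof (intro exI allI impI)
      fix m n assume mn: "N \<le> m" "N \<le> n"
      have a: "1 / (real m + 1) \<le> 1 / (real N + 1)" using mn by (simp add: frac_le)
      have b: "1 / (real n + 1) \<le> 1 / (real N + 1)" using mn by (simp add: frac_le)
      have "(norm (xs m - xs n))^2 \<le> 4 * (1 / (real m + 1) + 1 / (real n + 1)) / M" by (rule dist_bd)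
      also have "\<dots> \<le> 4 * (2 / (real N + 1)) / M" using a b Mpos
        by (intro divide_right_mono mult_left_mono) auto
      also have "\<dots> = 8 / ((real N + 1) * M)" by simp
      also have "\<dots> < e^2"
      proof -
        have "8 / (M * e^2) < real N + 1" using N by simp
        hence "8 < (real N + 1) * (M * e^2)" using Mpos ep by (simp add: pos_divide_less_eq)
        moreover have "(real N + 1) * M > 0" using Mpos by simp
        ultimately show ?thesis by (simp add: pos_divide_less_eq algebra_simps)
      qed
      finally have "(norm (xs m - xs n))^2 < e^2" .
      hence "norm (xs m - xs n) < e" using ep by (smt (verit) power_mono norm_ge_zero)
      thus "dist (xs m) (xs n) < e" by (simp add: dist_norm)
    qed
  qed
  then obtain z0 where lim: "xs \<longlonglongrightarrow> z0" using Cauchy_convergent convergent_def by blast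
  have nz0: "norm z0 \<le> 1"
    using tendsto_norm[OF lim] xsn by (meson LIMSEQ_le_const2)
  have flim: "(\<lambda>n. f (xs n)) \<longlonglongrightarrow> f z0"
  proof -
    have "(\<lambda>n. norm (xs n - z0)) \<longlonglongrightarrow> 0" using lim LIM_zero tendsto_norm_zero by blast
    hence "(\<lambda>n. norm (xs n - z0) * \<bar>K\<bar>) \<longlonglongrightarrow> 0" by (simp add: tendsto_mult_left_zero)
    moreover have "cmod (f (xs n) - f z0) \<le> norm (xs n - z0) * \<bar>K\<bar>" for n
      using bd[of "xs n - z0"] fdiff
      by (metis abs_ge_self mult_left_mono norm_ge_zero order_trans)
    ultimately have "(\<lambda>n. f (xs n) - f z0) \<longlonglongrightarrow> 0"
      by (intro Lim_null_comparison[of "\<lambda>n. f (xs n) - f z0" "\<lambda>n. norm (xs n - z0) * \<bar>K\<bar>"]) (auto intro: always_eventually)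
    thus ?thesis by (rule LIM_zero_cancel)
  qed
  have "Re (f z0) \<ge> M"
  proof -
    have l1: "(\<lambda>n. Re (f (xs n))) \<longlonglongrightarrow> Re (f z0)" using tendsto_Re[OF flim] .
    have l2: "(\<lambda>n. M - 1 / (real n + 1)) \<longlonglongrightarrow> M"
      using LIMSEQ_inverse_real_of_nat_add_minus[of M] by (simp add: inverse_eq_divide add.commute)
    show ?thesis by (rule LIMSEQ_le[OF l2 l1]) (use xsM less_imp_le in blast)
  qed
  have z0S: "z0 \<in> S" using nz0 by (simp add: S_def)
  have Rf: "Re (f z0) = M" using upper[OF z0S] \<open>Re (f z0) \<ge> M\<close> by simp
  have "M \<le> cmod (f z0)" using Rf complex_Re_le_cmod by metis
  also have "\<dots> \<le> M * norm z0" by (rule key)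
  finally have "1 \<le> norm z0" using Mpos by simp
  hence nz1: "norm z0 = 1" using nz0 by simp
  have "cmod (f z0) \<le> M" using key[of z0] nz1 by simp
  hence "(cmod (f z0))^2 \<le> M^2" by (intro power_mono) auto
  hence "(Im (f z0))^2 \<le> 0" using Rf cmod_power2[of "f z0"] by simp
  hence "Im (f z0) = 0" by simp
  hence fz0: "f z0 = complex_of_real M" using Rf by (simp add: complex_eq_iff)
  have orth: "cinner y z0 = 0" if fy: "f y = 0" for y
  proof (rule small_orth)
    show "(norm y)^2 \<ge> 0" by simp
    fix s :: real assume "s > 0"
    define c where "c = cinner y z0"
    define t where "t = - complex_of_real s * cnj c"
    have "f (z0 + scaleC t y) = complex_of_real M" using fy fz0 by (simp add: add sc)
    hence "M \<le> M * norm (z0 + scaleC t y)" using key[of "z0 + scaleC t y"] by simp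
    hence "1 \<le> norm (z0 + scaleC t y)" using Mpos by simp
    hence n1: "1 \<le> (norm (z0 + scaleC t y))^2" by (simp add: one_le_power)
    have zy: "cinner z0 y = cnj c" unfolding c_def by (rule cinner_conj)
    have zz: "cinner z0 z0 = 1" using nz1 by (simp add: cinner_self)
    have yy: "cinner y y = complex_of_real ((norm y)^2)" by (rule cinner_self)
    have "complex_of_real ((norm (z0 + scaleC t y))^2) = cinner (z0 + scaleC t y) (z0 + scaleC t y)"
      by (simp add: cinner_self)
    also have "\<dots> = cinner z0 z0 + cnj t * cinner z0 y + t * cinner y z0 + t * cnj t * cinner y y"
      by (simp add: cinner_add_left cinner_add_right cinner_scaleC_left cinner_scaleC_right algebra_simps)
    also have "\<dots> = 1 - 2 * complex_of_real s * (c * cnj c) + (complex_of_real s)^2 * (c * cnj c) * complex_of_real ((norm y)^2)"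
      unfolding zy zz yy c_def[symmetric] t_def by (simp add: algebra_simps power2_eq_square)
    also have "\<dots> = complex_of_real (1 - 2 * s * (cmod c)^2 + s^2 * (cmod c)^2 * (norm y)^2)"
      unfolding complex_norm_square[symmetric] by simp
    finally have "(norm (z0 + scaleC t y))^2 = 1 - 2 * s * (cmod c)^2 + s^2 * (cmod c)^2 * (norm y)^2"
      using of_real_eq_iff by blast
    thus "2 * s * (cmod (cinner y z0))^2 \<le> s^2 * (cmod (cinner y z0))^2 * (norm y)^2"
      using n1 unfolding c_def by linarith
  qed
  show ?thesis
  proof (intro exI allI)
    fix y
    define y' where "y' = y - scaleC (f y / complex_of_real M) z0"
    have "f y' = 0" unfolding y'_def fdiff sc fz0 using Mpos by simp
    hence "cinner y' z0 = 0" by (rule orth)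
    hence "cinner y z0 = f y / complex_of_real M"
      unfolding y'_def using nz1 by (simp add: cinner_diff_left cinner_scaleC_left cinner_self)
    thus "f y = cinner y (scaleC (complex_of_real M) z0)"
      using Mpos by (simp add: cinner_scaleC_right field_simps)
  qed
qed



lemma bclin_add: "bounded_clinear T \<Longrightarrow> T (x + y) = T x + T y"
  by (simp add: bounded_clinear_def)
lemma bclin_sc: "bounded_clinear T \<Longrightarrow> T (scaleC a x) = scaleC a (T x)"
  by (simp add: bounded_clinear_def)
lemma bclin_bound: "bounded_clinear T \<Longrightarrow> \<exists>K\<ge>0. \<forall>x. norm (T x) \<le> norm x * K"
proof -
  assume "bounded_clinear T"
  then obtain K where K: "\<forall>x. norm (T x) \<le> norm x * K" by (auto simp: bounded_clinear_def)
  have "norm (T x) \<le> norm x * max K 0" for x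
    using K[rule_format, of x] by (smt (verit) mult_left_mono norm_ge_zero max.cobounded1)
  thus ?thesis by (intro exI[of _ "max K 0"]) auto
qed

lemma adj_exists:
  assumes "bounded_clinear (T::'a::chilbert_space \<Rightarrow> 'a)"
  shows "\<exists>S. \<forall>x y. cinner (T x) y = cinner x (S y)"
proof -
  obtain K where K: "K \<ge> 0" "\<And>x. norm (T x) \<le> norm x * K" using bclin_bound[OF assms] by blast
  have "\<forall>y. \<exists>z. \<forall>x. cinner (T x) y = cinner x z"
  proof
    fix y
    show "\<exists>z. \<forall>x. cinner (T x) y = cinner x z"
    proof (rule riesz)
      fix x1 x2 show "cinner (T (x1 + x2)) y = cinner (T x1) y + cinner (T x2) y"
        by (simp add: bclin_add[OF assms] cinner_add_left)
    next
      fix a x show "cinner (T (scaleC a x)) y = a * cinner (T x) y"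
        by (simp add: bclin_sc[OF assms] cinner_scaleC_left)
    next
      fix x
      have "cmod (cinner (T x) y) \<le> norm (T x) * norm y" by (rule cs)
      also have "\<dots> \<le> norm x * K * norm y" using K(2)[of x] by (simp add: mult_right_mono)
      finally show "cmod (cinner (T x) y) \<le> norm x * (K * norm y)" by (simp add: mult.assoc)
    qed
  qed
  thus ?thesis by metis
qed

lemma adj:
  assumes "bounded_clinear T"
  shows "cinner (T x) y = cinner x (cadjoint T y)"
proof -
  obtain S where S: "\<forall>x y. cinner (T x) y = cinner x (S y)" using adj_exists[OF assms] by blast
  have "\<exists>!S. \<forall>x y. cinner (T x) y = cinner x (S y)"
  proof (rule ex1I[of _ S])
    show "\<forall>x y. cinner (T x) y = cinner x (S y)" by (rule S)
  next
    fix S' assume S': "\<forall>x y. cinner (T x) y = cinner x (S' y)"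
    show "S' = S"
    proof
      fix y show "S' y = S y" by (rule ext_cinner) (metis S S')
    qed
  qed
  hence "\<forall>x y. cinner (T x) y = cinner x (cadjoint T y)"
    unfolding cadjoint_def by (rule theI')
  thus ?thesis by blast
qed

lemma adj2:
  assumes "bounded_clinear T"
  shows "cinner (cadjoint T y) x = cinner y (T x)"
  using adj[OF assms, of x y] by (metis cinner_conj)

lemma adj_bclin:
  assumes "bounded_clinear T"
  shows "bounded_clinear (cadjoint T)"
proof -
  obtain K where K: "K \<ge> 0" "\<And>x. norm (T x) \<le> norm x * K" using bclin_bound[OF assms] by blast
  have a: "cadjoint T (x + y) = cadjoint T x + cadjoint T y" for x y
    by (rule ext_cinner) (simp add: adj[OF assms, symmetric] cinner_add_right)
  have b: "cadjoint T (scaleC a x) = scaleC a (cadjoint T x)" for a x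
    by (rule ext_cinner) (simp add: adj[OF assms, symmetric] cinner_scaleC_right)
  have c: "norm (cadjoint T y) \<le> norm y * K" for y
  proof -
    let ?z = "cadjoint T y"
    have "complex_of_real ((norm ?z)^2) = cinner (T ?z) y"
      by (simp add: adj[OF assms] cinner_self)
    hence "(norm ?z)^2 = cmod (cinner (T ?z) y)" by (metis norm_of_real abs_of_nonneg zero_le_power2)
    also have "\<dots> \<le> norm (T ?z) * norm y" by (rule cs)
    also have "\<dots> \<le> norm ?z * K * norm y" using K(2)[of ?z] by (simp add: mult_right_mono)
    finally have "norm ?z * norm ?z \<le> norm ?z * (norm y * K)" by (simp add: power2_eq_square algebra_simps)
    thus ?thesis
      by (cases "norm ?z = 0") (use K(1) in auto)
  qed
  show ?thesis unfolding bounded_clinear_def using a b c by blast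
qed

lemma bclin_comp:
  assumes "bounded_clinear S" "bounded_clinear T"
  shows "bounded_clinear (S \<circ> T)"
proof -
  obtain K where K: "K \<ge> 0" "\<And>x. norm (S x) \<le> norm x * K" using bclin_bound[OF assms(1)] by blast
  obtain L where L: "L \<ge> 0" "\<And>x. norm (T x) \<le> norm x * L" using bclin_bound[OF assms(2)] by blast
  have "norm (S (T x)) \<le> norm x * (L * K)" for x
  proof -
    have "norm (S (T x)) \<le> norm (T x) * K" by (rule K(2))
    also have "\<dots> \<le> norm x * L * K" using L(2)[of x] K(1) by (simp add: mult_right_mono)
    finally show ?thesis by (simp add: mult.assoc)
  qed
  thus ?thesis using assms unfolding bounded_clinear_def by auto
qed

lemma bclin_opadd:
  assumes "bounded_clinear S" "bounded_clinear T"
  shows "bounded_clinear (opadd S T)"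
proof -
  obtain K where K: "K \<ge> 0" "\<And>x. norm (S x) \<le> norm x * K" using bclin_bound[OF assms(1)] by blast
  obtain L where L: "L \<ge> 0" "\<And>x. norm (T x) \<le> norm x * L" using bclin_bound[OF assms(2)] by blast
  have "norm (S x + T x) \<le> norm x * (K + L)" for x
    using norm_triangle_ineq[of "S x" "T x"] K(2)[of x] L(2)[of x] by (simp add: algebra_simps)
  moreover have "S (scaleC a x) + T (scaleC a x) = scaleC a (S x + T x)" for a x
    using assms by (simp add: bclin_sc scaleC_add_right)
  moreover have "S (x + y) + T (x + y) = (S x + T x) + (S y + T y)" for x y
    using assms by (simp add: bclin_add algebra_simps)
  ultimately show ?thesis unfolding bounded_clinear_def opadd_def by auto
qed

lemma bclin_blin:
  assumes "bounded_clinear T" shows "bounded_linear T"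
proof -
  obtain K where K: "K \<ge> 0" "\<And>x. norm (T x) \<le> norm x * K" using bclin_bound[OF assms] by blast
  show ?thesis
  proof (rule bounded_linear_intro)
    show "T (x + y) = T x + T y" for x y by (rule bclin_add[OF assms])
    show "T (scaleR r x) = scaleR r (T x)" for r x by (simp add: scaleR_scaleC bclin_sc[OF assms])
    show "norm (T x) \<le> norm x * K" for x by (rule K(2))
  qed
qed

lemma quad_le_onorm:
  assumes "bounded_clinear T"
  shows "cmod (cinner (T x) x) \<le> onorm T * (norm x)^2"
proof -
  have "cmod (cinner (T x) x) \<le> norm (T x) * norm x" by (rule cs)
  also have "\<dots> \<le> onorm T * norm x * norm x"
    using onorm[OF bclin_blin[OF assms], of x] by (simp add: mult_right_mono)
  finally show ?thesis by (simp add: power2_eq_square mult.assoc)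
qed

lemma numrad_props:
  assumes "bounded_clinear S"
  shows "numrad S \<ge> 0" "cmod (cinner (S y) y) \<le> numrad S * (norm y)^2"
proof -
  obtain K where K: "K \<ge> 0" "\<And>x. norm (S x) \<le> norm x * K" using bclin_bound[OF assms] by blast
  have S0: "S 0 = 0" using bclin_add[OF assms, of 0 0] by simp
  have bdd: "bdd_above ((\<lambda>x. cmod (cinner (S x) x)) ` {x. norm x \<le> 1})"
  proof (rule bdd_aboveI2)
    fix x :: 'a assume "x \<in> {x. norm x \<le> 1}"
    hence x1: "norm x \<le> 1" by simp
    have "cmod (cinner (S x) x) \<le> norm (S x) * norm x" by (rule cs)
    also have "\<dots> \<le> (norm x * K) * 1" using K(2)[of x] x1 K(1) by (intro mult_mono) auto
    also have "\<dots> \<le> K" using x1 K(1) by (simp add: mult_left_le_one_le)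
    finally show "cmod (cinner (S x) x) \<le> K" .
  qed
  have up: "norm x \<le> 1 \<Longrightarrow> cmod (cinner (S x) x) \<le> numrad S" for x
    unfolding numrad_def by (rule cSUP_upper[OF _ bdd]) simp
  show "numrad S \<ge> 0" using up[of 0] S0 by simp
  show "cmod (cinner (S y) y) \<le> numrad S * (norm y)^2"
  proof (cases "y = 0")
    case True thus ?thesis using S0 by simp
  next
    case False
    define u where "u = scaleC (complex_of_real (1 / norm y)) y"
    have "norm u = 1" using False by (simp add: u_def norm_scaleC norm_divide)
    have "cinner (S u) u = complex_of_real (1 / norm y) * complex_of_real (1 / norm y) * cinner (S y) y"
      by (simp add: u_def bclin_sc[OF assms] cinner_scaleC_left cinner_scaleC_right)
    hence "cmod (cinner (S u) u) = cmod (cinner (S y) y) / (norm y)^2"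
      by (simp add: norm_mult norm_divide power2_eq_square)
    hence "cmod (cinner (S y) y) / (norm y)^2 \<le> numrad S" using up[of u] \<open>norm u = 1\<close> by simp
    thus ?thesis using False by (simp add: field_simps)
  qed
qed



lemma arith_final:
  fixes S t W N4 N2 \<alpha> v :: real
  assumes "0 \<le> S" "0 \<le> t" "t \<le> S" "t \<le> W" "2*S^2 \<le> N4" "2*S \<le> N2" "0\<le>\<alpha>" "\<alpha>\<le>1" "0 \<le> v"
    "v^2 \<le> (S+t)/2"
  shows "v^4 \<le> (1+\<alpha>)/8*N4 + (1-\<alpha>)/4*W^2 + 1/4*N2*W"
proof -
  have "v^4 = (v^2)^2" by simp
  also have "\<dots> \<le> ((S+t)/2)^2" using assms by (intro power_mono) auto
  finally have h1: "v^4 \<le> (S^2 + 2*(S*t) + t^2)/4" by (simp add: power2_eq_square algebra_simps)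
  have "t^2 \<le> S^2" using assms by (intro power_mono) auto
  hence "\<alpha>*t^2 \<le> \<alpha>*S^2" using assms by (intro mult_left_mono) auto
  also have "\<dots> \<le> \<alpha>*(N4/2)" using assms by (intro mult_left_mono) auto
  finally have h2: "\<alpha>*t^2 \<le> \<alpha>*(N4/2)" .
  have "t^2 \<le> W^2" using assms by (intro power_mono) auto
  hence h3: "(1-\<alpha>)*t^2 \<le> (1-\<alpha>)*W^2" using assms by (intro mult_left_mono) auto
  have "S*t \<le> S*W" using assms by (intro mult_left_mono) auto
  hence "2*(S*t) \<le> 2*S*W" by simp
  also have "\<dots> \<le> N2*W" using assms by (intro mult_right_mono) auto
  finally have h4: "2*(S*t) \<le> N2*W" .
  have h5: "t^2 = \<alpha>*t^2 + (1-\<alpha>)*t^2" by (simp add: algebra_simps)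
  have "2*S^2 \<le> N4" by (rule assms(5))
  thus ?thesis using h1 h2 h3 h4 h5 by (simp add: algebra_simps divide_simps)
qed



lemma sq_le_prod: "(norm x)^2 = cmod (cinner x x)" for x :: "'a::chilbert_space"
  by (simp only: cinner_self norm_of_real) simp

lemma pointwise:
  fixes B C :: "'a::chilbert_space \<Rightarrow> 'a" and \<alpha> :: real and x1 x2 :: 'a
  assumes bB: "bounded_clinear B" and bC: "bounded_clinear C"
    and "0 \<le> \<alpha>" and "\<alpha> \<le> 1"
    and r1: "(norm x1)^2 + (norm x2)^2 \<le> 1"
  shows "(cmod (cinner (B x2) x1 + cinner (C x1) x2)) ^ 4 \<le>
     (1 + \<alpha>) / 8 * max (onorm (opadd (abs_sq B \<circ> abs_sq B) (abs_adj_sq C \<circ> abs_adj_sq C)))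
                         (onorm (opadd (abs_adj_sq B \<circ> abs_adj_sq B) (abs_sq C \<circ> abs_sq C)))
     + (1 - \<alpha>) / 4 * (max (numrad (B \<circ> C)) (numrad (C \<circ> B)))^2
     + 1 / 4 * max (onorm (opadd (abs_sq B) (abs_adj_sq C))) (onorm (opadd (abs_adj_sq B) (abs_sq C)))
             * max (numrad (B \<circ> C)) (numrad (C \<circ> B))"
proof -
  define Bs where "Bs = cadjoint B"
  define Cs where "Cs = cadjoint C"
  have bBs: "bounded_clinear Bs" unfolding Bs_def by (rule adj_bclin[OF bB])
  have bCs: "bounded_clinear Cs" unfolding Cs_def by (rule adj_bclin[OF bC])
  have aB: "cinner (B u) w = cinner u (Bs w)" for u w unfolding Bs_def by (rule adj[OF bB])
  have aC: "cinner (C u) w = cinner u (Cs w)" for u w unfolding Cs_def by (rule adj[OF bC])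
  have aBs: "cinner (Bs u) w = cinner u (B w)" for u w unfolding Bs_def by (rule adj2[OF bB])
  have aCs: "cinner (Cs u) w = cinner u (C w)" for u w unfolding Cs_def by (rule adj2[OF bC])
  define M4a where "M4a = opadd (abs_sq B \<circ> abs_sq B) (abs_adj_sq C \<circ> abs_adj_sq C)"
  define M4b where "M4b = opadd (abs_adj_sq B \<circ> abs_adj_sq B) (abs_sq C \<circ> abs_sq C)"
  define M2a where "M2a = opadd (abs_sq B) (abs_adj_sq C)"
  define M2b where "M2b = opadd (abs_adj_sq B) (abs_sq C)"
  have bsB: "bounded_clinear (abs_sq B)" unfolding abs_sq_def using bB bBs Bs_def bclin_comp by blast
  have bsC: "bounded_clinear (abs_sq C)" unfolding abs_sq_def using bC bCs Cs_def bclin_comp by blast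
  have basB: "bounded_clinear (abs_adj_sq B)" unfolding abs_adj_sq_def using bB bBs Bs_def bclin_comp by blast
  have basC: "bounded_clinear (abs_adj_sq C)" unfolding abs_adj_sq_def using bC bCs Cs_def bclin_comp by blast
  have bM4a: "bounded_clinear M4a" unfolding M4a_def using bsB basC by (intro bclin_opadd bclin_comp)
  have bM4b: "bounded_clinear M4b" unfolding M4b_def using basB bsC by (intro bclin_opadd bclin_comp)
  have bM2a: "bounded_clinear M2a" unfolding M2a_def using bsB basC by (intro bclin_opadd)
  have bM2b: "bounded_clinear M2b" unfolding M2b_def using basB bsC by (intro bclin_opadd)
  define N4 where "N4 = max (onorm M4a) (onorm M4b)"
  define N2 where "N2 = max (onorm M2a) (onorm M2b)"
  define W where "W = max (numrad (B \<circ> C)) (numrad (C \<circ> B))"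
  have bBC: "bounded_clinear (B \<circ> C)" using bB bC by (rule bclin_comp)
  have bCB: "bounded_clinear (C \<circ> B)" using bC bB by (rule bclin_comp)
  have W0: "W \<ge> 0" unfolding W_def using numrad_props(1)[OF bBC] by simp
  have N40: "N4 \<ge> 0" unfolding N4_def using onorm_pos_le[OF bclin_blin[OF bM4a]] by simp
  define n1 where "n1 = norm x1"
  define n2 where "n2 = norm x2"
  have n1: "n1 \<ge> 0" "n2 \<ge> 0" by (simp_all add: n1_def n2_def)
  have r: "n1^2 + n2^2 \<le> 1" using r1 by (simp add: n1_def n2_def)
  define z where "z = cinner (B x2) x1 + cinner (C x1) x2"
  define v where "v = cmod z"
  define na where "na = hp.nrm (B x2, C x1)"
  define nb where "nb = hp.nrm (Cs x2, Bs x1)"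
  define t where "t = cmod (cinner (B x2) (Cs x2) + cinner (C x1) (Bs x1))"
  have na2: "na^2 = (norm (B x2))^2 + (norm (C x1))^2" unfolding na_def by (rule hp_nrm2)
  have nb2: "nb^2 = (norm (Cs x2))^2 + (norm (Bs x1))^2" unfolding nb_def by (rule hp_nrm2)
  have na0: "na \<ge> 0" "nb \<ge> 0" unfolding na_def nb_def by (simp_all add: hp_nrm_ge0)
  have ez: "cinner x1 (Cs x2) + cinner x2 (Bs x1) = z"
    unfolding z_def by (simp add: aB[symmetric] aC[symmetric])
  have "cmod (z * z) \<le> (n1^2 + n2^2) * (na * nb + t) / 2"
    using pair_buzano[of "B x2" x1 "C x1" x2 "Cs x2" "Bs x1"] unfolding ez
    by (simp add: z_def n1_def n2_def na_def nb_def t_def)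
  also have "\<dots> \<le> 1 * (na * nb + t) / 2"
    using r na0 by (intro divide_right_mono mult_right_mono) (auto simp: t_def)
  finally have vb: "v^2 \<le> (na * nb + t) / 2" by (simp add: v_def norm_mult power2_eq_square)
  have tS: "t \<le> na * nb" unfolding t_def na_def nb_def by (rule pair_cs)
  have tW: "t \<le> W"
  proof -
    have "cinner (B x2) (Cs x2) + cinner (C x1) (Bs x1) = cinner ((C \<circ> B) x2) x2 + cinner ((B \<circ> C) x1) x1"
      by (simp add: aC aB)
    hence "t \<le> cmod (cinner ((C \<circ> B) x2) x2) + cmod (cinner ((B \<circ> C) x1) x1)"
      unfolding t_def by (metis norm_triangle_ineq)
    also have "\<dots> \<le> numrad (C \<circ> B) * n2^2 + numrad (B \<circ> C) * n1^2"
      unfolding n1_def n2_def using numrad_props(2)[OF bCB] numrad_props(2)[OF bBC] by (intro add_mono)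
    also have "\<dots> \<le> W * n2^2 + W * n1^2" unfolding W_def
      by (intro add_mono mult_right_mono) auto
    also have "\<dots> \<le> W * 1" using r W0 by (simp add: distrib_left[symmetric] add.commute mult_left_le)
    finally show ?thesis by simp
  qed
  define p where "p = norm (Bs (B x2))"
  define q where "q = norm (Cs (C x1))"
  define p' where "p' = norm (C (Cs x2))"
  define q' where "q' = norm (B (Bs x1))"
  have "(norm (B x2))^2 = cmod (cinner (B x2) (B x2))" by (rule sq_le_prod)
  also have "\<dots> = cmod (cinner x2 (Bs (B x2)))" by (simp add: aB)
  also have "\<dots> \<le> n2 * p" unfolding n2_def p_def by (rule cs)
  finally have e1: "(norm (B x2))^2 \<le> n2 * p" .
  have "(norm (C x1))^2 = cmod (cinner (C x1) (C x1))" by (rule sq_le_prod)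
  also have "\<dots> = cmod (cinner x1 (Cs (C x1)))" by (simp add: aC)
  also have "\<dots> \<le> n1 * q" unfolding n1_def q_def by (rule cs)
  finally have e2: "(norm (C x1))^2 \<le> n1 * q" .
  have "(norm (Cs x2))^2 = cmod (cinner (Cs x2) (Cs x2))" by (rule sq_le_prod)
  also have "\<dots> = cmod (cinner x2 (C (Cs x2)))" by (simp add: aCs)
  also have "\<dots> \<le> n2 * p'" unfolding n2_def p'_def by (rule cs)
  finally have e3: "(norm (Cs x2))^2 \<le> n2 * p'" .
  have "(norm (Bs x1))^2 = cmod (cinner (Bs x1) (Bs x1))" by (rule sq_le_prod)
  also have "\<dots> = cmod (cinner x1 (B (Bs x1)))" by (simp add: aBs)
  also have "\<dots> \<le> n1 * q'" unfolding n1_def q'_def by (rule cs)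
  finally have e4: "(norm (Bs x1))^2 \<le> n1 * q'" .
  have pq0: "p \<ge> 0" "q \<ge> 0" "p' \<ge> 0" "q' \<ge> 0" by (simp_all add: p_def q_def p'_def q'_def)
  have cs2: "(a * c + b * d)^2 \<le> (a^2 + b^2) * (c^2 + d^2)" for a b c d :: real
  proof -
    have "0 \<le> (a * d - b * c)^2" by simp
    thus ?thesis by (simp add: power2_eq_square algebra_simps)
  qed
  have na4: "na^4 \<le> p^2 + q^2"
  proof -
    have "na^4 = (na^2)^2" by simp
    also have "\<dots> \<le> (n2 * p + n1 * q)^2" using na2 e1 e2 by (intro power_mono) auto
    also have "\<dots> \<le> (n2^2 + n1^2) * (p^2 + q^2)" by (rule cs2)
    also have "\<dots> \<le> 1 * (p^2 + q^2)" using r by (intro mult_right_mono) auto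
    finally show ?thesis by simp
  qed
  have nb4: "nb^4 \<le> p'^2 + q'^2"
  proof -
    have "nb^4 = (nb^2)^2" by simp
    also have "\<dots> \<le> (n2 * p' + n1 * q')^2" using nb2 e3 e4 by (intro power_mono) auto
    also have "\<dots> \<le> (n2^2 + n1^2) * (p'^2 + q'^2)" by (rule cs2)
    also have "\<dots> \<le> 1 * (p'^2 + q'^2)" using r by (intro mult_right_mono) auto
    finally show ?thesis by simp
  qed
  have c4a: "cinner (M4a x2) x2 = complex_of_real (p^2 + p'^2)"
    unfolding M4a_def opadd_def abs_sq_def abs_adj_sq_def Bs_def[symmetric] Cs_def[symmetric] p_def p'_def
    by (simp add: cinner_add_left aBs aB aC aCs cinner_self del: of_real_power)
  have q4a: "p^2 + p'^2 \<le> onorm M4a * n2^2"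
    using quad_le_onorm[OF bM4a, of x2] unfolding n2_def c4a norm_of_real by simp
  have c4b: "cinner (M4b x1) x1 = complex_of_real (q'^2 + q^2)"
    unfolding M4b_def opadd_def abs_sq_def abs_adj_sq_def Bs_def[symmetric] Cs_def[symmetric] q_def q'_def
    by (simp add: cinner_add_left aBs aB aC aCs cinner_self del: of_real_power)
  have q4b: "q'^2 + q^2 \<le> onorm M4b * n1^2"
    using quad_le_onorm[OF bM4b, of x1] unfolding n1_def c4b norm_of_real by simp
  have N4b: "na^4 + nb^4 \<le> N4"
  proof -
    have "na^4 + nb^4 \<le> onorm M4a * n2^2 + onorm M4b * n1^2" using na4 nb4 q4a q4b by simp
    also have "\<dots> \<le> N4 * n2^2 + N4 * n1^2" unfolding N4_def by (intro add_mono mult_right_mono) auto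
    also have "\<dots> \<le> N4 * 1" using r N40 by (simp add: distrib_left[symmetric] add.commute mult_left_le)
    finally show ?thesis by simp
  qed
  have c2a: "cinner (M2a x2) x2 = complex_of_real ((norm (B x2))^2 + (norm (Cs x2))^2)"
    unfolding M2a_def opadd_def abs_sq_def abs_adj_sq_def Bs_def[symmetric] Cs_def[symmetric]
    by (simp add: cinner_add_left aBs aB aC aCs cinner_self del: of_real_power)
  have q2a: "(norm (B x2))^2 + (norm (Cs x2))^2 \<le> onorm M2a * n2^2"
    using quad_le_onorm[OF bM2a, of x2] unfolding n2_def c2a norm_of_real by simp
  have c2b: "cinner (M2b x1) x1 = complex_of_real ((norm (Bs x1))^2 + (norm (C x1))^2)"
    unfolding M2b_def opadd_def abs_sq_def abs_adj_sq_def Bs_def[symmetric] Cs_def[symmetric]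
    by (simp add: cinner_add_left aBs aB aC aCs cinner_self del: of_real_power)
  have q2b: "(norm (Bs x1))^2 + (norm (C x1))^2 \<le> onorm M2b * n1^2"
    using quad_le_onorm[OF bM2b, of x1] unfolding n1_def c2b norm_of_real by simp
  have N20: "N2 \<ge> 0" unfolding N2_def using onorm_pos_le[OF bclin_blin[OF bM2a]] by simp
  have N2b: "na^2 + nb^2 \<le> N2"
  proof -
    have "na^2 + nb^2 \<le> onorm M2a * n2^2 + onorm M2b * n1^2" using na2 nb2 q2a q2b by simp
    also have "\<dots> \<le> N2 * n2^2 + N2 * n1^2" unfolding N2_def by (intro add_mono mult_right_mono) auto
    also have "\<dots> \<le> N2 * 1" using r N20 by (simp add: distrib_left[symmetric] add.commute mult_left_le)
    finally show ?thesis by simp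
  qed
  have S1: "2 * (na * nb)^2 \<le> N4"
  proof -
    have "0 \<le> (na^2 - nb^2)^2" by simp
    hence "2 * (na * nb)^2 \<le> na^4 + nb^4" by (simp add: power2_eq_square algebra_simps power4_eq_xxxx)
    thus ?thesis using N4b by simp
  qed
  have S2: "2 * (na * nb) \<le> N2"
  proof -
    have "0 \<le> (na - nb)^2" by simp
    hence "2 * (na * nb) \<le> na^2 + nb^2" by (simp add: power2_eq_square algebra_simps)
    thus ?thesis using N2b by simp
  qed
  have "v^4 \<le> (1+\<alpha>)/8*N4 + (1-\<alpha>)/4*W^2 + 1/4*N2*W"
    by (rule arith_final[of "na*nb" t]) (use na0 tS tW S1 S2 assms vb in \<open>auto simp: t_def v_def\<close>)
  thus ?thesis unfolding v_def z_def N4_def N2_def W_def M4a_def M4b_def M2a_def M2b_def by simp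
qed



theorem mainTheorem10:
  fixes B C :: "'a::chilbert_space \<Rightarrow> 'a" and \<alpha> :: real
  assumes "bounded_clinear B" and "bounded_clinear C"
    and "0 \<le> \<alpha>" and "\<alpha> \<le> 1"
  shows "(numrad_block (\<lambda>_. 0) B C (\<lambda>_. 0)) ^ 4 \<le>
     (1 + \<alpha>) / 8 * max (onorm (opadd (abs_sq B \<circ> abs_sq B) (abs_adj_sq C \<circ> abs_adj_sq C)))
                         (onorm (opadd (abs_adj_sq B \<circ> abs_adj_sq B) (abs_sq C \<circ> abs_sq C)))
     + (1 - \<alpha>) / 4 * max ((numrad (B \<circ> C))\<^sup>2) ((numrad (C \<circ> B))\<^sup>2)
     + 1 / 4 * max (onorm (opadd (abs_sq B) (abs_adj_sq C))) (onorm (opadd (abs_adj_sq B) (abs_sq C)))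
             * max (numrad (B \<circ> C)) (numrad (C \<circ> B))"
proof -
  have bBC: "bounded_clinear (B \<circ> C)" using assms by (intro bclin_comp)
  have bCB: "bounded_clinear (C \<circ> B)" using assms by (intro bclin_comp)
  have mx: "max ((numrad (B \<circ> C))\<^sup>2) ((numrad (C \<circ> B))\<^sup>2) = (max (numrad (B \<circ> C)) (numrad (C \<circ> B)))^2"
  proof -
    have a: "numrad (B \<circ> C) \<ge> 0" "numrad (C \<circ> B) \<ge> 0"
      using numrad_props(1)[OF bBC] numrad_props(1)[OF bCB] by auto
    show ?thesis
    proof (cases "numrad (B \<circ> C) \<le> numrad (C \<circ> B)")
      case True
      hence "(numrad (B \<circ> C))\<^sup>2 \<le> (numrad (C \<circ> B))\<^sup>2" using a by (intro power_mono) auto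
      thus ?thesis using True by (simp add: max_def)
    next
      case False
      hence "(numrad (C \<circ> B))\<^sup>2 \<le> (numrad (B \<circ> C))\<^sup>2" using a by (intro power_mono) auto
      thus ?thesis using False by (simp add: max_def)
    qed
  qed
  define R where "R = (1 + \<alpha>) / 8 * max (onorm (opadd (abs_sq B \<circ> abs_sq B) (abs_adj_sq C \<circ> abs_adj_sq C)))
                         (onorm (opadd (abs_adj_sq B \<circ> abs_adj_sq B) (abs_sq C \<circ> abs_sq C)))
     + (1 - \<alpha>) / 4 * (max (numrad (B \<circ> C)) (numrad (C \<circ> B)))^2
     + 1 / 4 * max (onorm (opadd (abs_sq B) (abs_adj_sq C))) (onorm (opadd (abs_adj_sq B) (abs_sq C)))
             * max (numrad (B \<circ> C)) (numrad (C \<circ> B))"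
  define P where "P = {(x1::'a, x2::'a). (norm x1)\<^sup>2 + (norm x2)\<^sup>2 \<le> 1}"
  define g where "g = (\<lambda>p::'a\<times>'a. cmod (cinner (0 + B (snd p)) (fst p) + cinner (C (fst p) + 0) (snd p)))"
  have gR: "g p ^ 4 \<le> R" if "p \<in> P" for p
  proof -
    obtain x1 x2 where p: "p = (x1, x2)" by fastforce
    have "(norm x1)^2 + (norm x2)^2 \<le> 1" using that by (simp add: P_def p)
    thus ?thesis unfolding g_def p R_def using pointwise[OF assms] by simp
  qed
  have P0: "(0, 0) \<in> P" by (simp add: P_def)
  have R0: "R \<ge> 0" using gR[OF P0] by (simp add: g_def)
  define R' where "R' = sqrt (sqrt R)"
  have R'0: "R' \<ge> 0" using R0 by (simp add: R'_def)
  have R'4: "R' ^ 4 = R"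
  proof -
    have "R' ^ 4 = (R'^2)^2" by simp
    also have "R'^2 = sqrt R" unfolding R'_def using R0 by simp
    also have "(sqrt R)^2 = R" using R0 by simp
    finally show ?thesis .
  qed
  have gR': "g p \<le> R'" if "p \<in> P" for p
  proof -
    have "g p ^ Suc 3 \<le> R' ^ Suc 3" using gR[OF that] R'4 by (simp add: numeral_eq_Suc)
    thus ?thesis using R'0 by (rule power_le_imp_le_base)
  qed
  have bdd: "bdd_above (g ` P)" using gR' by (intro bdd_aboveI2)
  have nb: "numrad_block (\<lambda>_. 0) B C (\<lambda>_. 0) = (SUP p\<in>P. g p)" unfolding numrad_block_def P_def g_def ..
  have le: "(SUP p\<in>P. g p) \<le> R'" using P0 gR' by (intro cSUP_least) auto
  have ge: "(SUP p\<in>P. g p) \<ge> 0" using cSUP_upper[OF P0 bdd] by (simp add: g_def)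
  have "(SUP p\<in>P. g p) ^ 4 \<le> R' ^ 4" using le ge by (intro power_mono)
  thus ?thesis unfolding nb mx R'4 R_def .
qed


end
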